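(* Let $L$ be a $\mathbb{Z}$-lattice, $A,s$ positive integers and $w\in R(A,L)$. Define $\mathfrak{S}_{w,s}(L)=\{(\alpha,\beta)\in(\mathbb{Z}/s\mathbb{Z})^2: L\prec_{A,(\alpha,\beta),s}w\}$, for every $K\in\mathrm{gen}(L)$ with $K\not\cong L$ define $\mathfrak{S}_{L,s}(K)=\{(\alpha,\beta)\in(\mathbb{Z}/s\mathbb{Z})^2: K\prec_{A,(\alpha,\beta),s}L\}$, and let $\mathfrak{S}_s=\mathfrak{S}_{w,s}(L)\cap\bigcap_{K}\mathfrak{S}_{L,s}(K)$, the intersection over all $K\in\mathrm{gen}(L)$ not isometric to $L$. Let $(\alpha,\beta)\in\mathfrak{S}_s$ and let $\ell=\mathbb{Z}v_1+\mathbb{Z}v_2=[A,b,a]$ with $(a,b)\equiv(\alpha,\beta)\pmod s$ and $Aa-b^2>0$. If $\ell$ is represented by some lattice in $\mathrm{gen}(L)$, then there exists a representation $\sigma:\ell\to L$ with $\sigma(v_1)=w$.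
   Context: All $\mathbb{Z}$-lattices are free $\mathbb{Z}$-modules of finite rank with a positive definite, integral symmetric bilinear form $B$; $Q(v)=B(v,v)$. A representation is a $B$-preserving linear map; $\cong$ means isometric. $[A,b,a]$ is the binary lattice $\mathbb{Z}v_1+\mathbb{Z}v_2$ with $Q(v_1)=A$, $B(v_1,v_2)=b$, $Q(v_2)=a$. $\mathrm{gen}(L)$ is the set of lattices on $V=\mathbb{Q}L$ locally isometric to $L$ at every prime. $R(A,K)=\{v\in K:Q(v)=A\}$. For lattices $K,L$ on $V$, $v\in R(A,K)$: $R_v(K,\alpha,\beta,s)=\{u\in K/sK:Q(u)\equiv\alpha,\ B(u,v)\equiv\beta\pmod s\}$; $R_v(K,L,s)=\{\tau\in O(V):\tau(sK)\subseteq L,\ \tau(v)\in L\}$; $K\prec_{A,(\alpha,\beta),s}L$ means: for every $v\in R(A,K)$ and every coset $u\in R_v(K,\alpha,\beta,s)$ there is $\tau\in R_v(K,L,s)$ with $\tau(\tilde u)\in L$ for all $\tilde u\in u$. For $v,w\in R(A,L)$: $R_{v,w}(L,s)=\{\tau\in R_v(L,L,s):\tau(v)=w\}$; $L\prec_{A,(\alpha,\beta),s}w$ means: for every $v\in R(A,L)$ and every coset $u\in R_v(L,\alpha,\beta,s)$ there is $\tau\in R_{v,w}(L,s)$ with $\tau(\tilde u)\in L$ for all $\tilde u\in u$. *)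

theory Defs
  imports "HOL-Analysis.Analysis" "HOL-Number_Theory.Cong"
begin

definition Bf :: "rat^'n^'n \<Rightarrow> rat^'n \<Rightarrow> rat^'n \<Rightarrow> rat" where
  "Bf G x y = (\<Sum>i\<in>UNIV. \<Sum>j\<in>UNIV. x$i * G$i$j * y$j)"

definition Qf :: "rat^'n^'n \<Rightarrow> rat^'n \<Rightarrow> rat" where
  "Qf G x = Bf G x x"

definition symmetric_form :: "rat^'n^'n \<Rightarrow> bool" where
  "symmetric_form G \<longleftrightarrow> (\<forall>i j. G$i$j = G$j$i)"

text \<open>b is a Z-basis of L, and a Q-basis of V (so L is a full lattice on V).\<close>
definition lattice_basis :: "(rat^'n) set \<Rightarrow> ('n \<Rightarrow> rat^'n) \<Rightarrow> bool" where
  "lattice_basis L b \<longleftrightarrow>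
     (\<forall>c::'n \<Rightarrow> rat. (\<Sum>i\<in>UNIV. c i *s b i) = 0 \<longrightarrow> (\<forall>i. c i = 0)) \<and>
     L = {(\<Sum>i\<in>UNIV. of_int (c i) *s b i) | c :: 'n \<Rightarrow> int. True}"

definition lattice_on :: "rat^'n^'n \<Rightarrow> (rat^'n) set \<Rightarrow> bool" where
  "lattice_on G L \<longleftrightarrow> (\<exists>b. lattice_basis L b) \<and>
     (\<forall>x\<in>L. \<forall>y\<in>L. Bf G x y \<in> \<int>) \<and>
     (\<forall>x\<in>L. x \<noteq> 0 \<longrightarrow> Qf G x > 0)"

definition orth :: "rat^'n^'n \<Rightarrow> (rat^'n \<Rightarrow> rat^'n) set" where
  "orth G = {\<tau>. (\<forall>x y. \<tau> (x + y) = \<tau> x + \<tau> y) \<and> (\<forall>c x. \<tau> (c *s x) = c *s \<tau> x)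
               \<and> bij \<tau> \<and> (\<forall>x y. Bf G (\<tau> x) (\<tau> y) = Bf G x y)}"

definition lattice_isometric :: "rat^'n^'n \<Rightarrow> (rat^'n) set \<Rightarrow> (rat^'n) set \<Rightarrow> bool" where
  "lattice_isometric G K L \<longleftrightarrow> (\<exists>f. bij_betw f K L \<and>
     (\<forall>x\<in>K. \<forall>y\<in>K. f (x + y) = f x + f y) \<and>
     (\<forall>x\<in>K. \<forall>y\<in>K. Bf G (f x) (f y) = Bf G x y))"

text \<open>Local isometry at p: there is U in GL_n(Z_p) with U^T G_K U = G_L, where G_K, G_L
  are Gram matrices of bases of K and L.  Equivalently some sigma in O(V_p) maps L_p onto K_p
  (sigma sends the L-basis to the K-basis transformed by U).  Z_p is realised as the inverse
  limit of Z/p^k Z: U is given by a compatible sequence of integer matrices M k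
  (M (k+1) = M k mod p^k), the unit condition is that p does not divide det (M 1), and the
  equation holds modulo p^k for every k.\<close>
definition locally_isometric_at :: "rat^'n^'n \<Rightarrow> int \<Rightarrow> (rat^'n) set \<Rightarrow> (rat^'n) set \<Rightarrow> bool" where
  "locally_isometric_at G p K L \<longleftrightarrow>
     (\<exists>bK bL. lattice_basis K bK \<and> lattice_basis L bL \<and>
       (\<exists>M :: nat \<Rightarrow> 'n \<Rightarrow> 'n \<Rightarrow> int.
          (\<forall>k i j. [M (Suc k) i j = M k i j] (mod p ^ k)) \<and>
          \<not> p dvd det (\<chi> i j. M 1 i j) \<and>
          (\<forall>k i j. \<exists>c::int.
              (\<Sum>a\<in>UNIV. \<Sum>b\<in>UNIV. of_int (M k a i) * Bf G (bK a) (bK b) * of_int (M k b j))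
                - Bf G (bL i) (bL j) = of_int (p ^ k * c))))"

definition genus :: "rat^'n^'n \<Rightarrow> (rat^'n) set \<Rightarrow> (rat^'n) set set" where
  "genus G L = {K. lattice_on G K \<and> (\<forall>p. prime p \<longrightarrow> locally_isometric_at G p K L)}"

definition rcong :: "int \<Rightarrow> rat \<Rightarrow> int \<Rightarrow> bool" where
  "rcong s x a \<longleftrightarrow> (\<exists>k::int. x = of_int (a + s * k))"

text \<open>K \<prec>_{A,(\<alpha>,\<beta>),s} L. Cosets u in K/sK are handled through representatives u \<in> K;
  the defining conditions depend only on the coset.\<close>
definition prec_lat :: "rat^'n^'n \<Rightarrow> int \<Rightarrow> int \<Rightarrow> int \<Rightarrow> int \<Rightarrow> (rat^'n) set \<Rightarrow> (rat^'n) set \<Rightarrow> bool" where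
  "prec_lat G A \<alpha> \<beta> s K L \<longleftrightarrow>
     (\<forall>v\<in>K. Qf G v = of_int A \<longrightarrow>
       (\<forall>u\<in>K. rcong s (Qf G u) \<alpha> \<and> rcong s (Bf G u v) \<beta> \<longrightarrow>
          (\<exists>\<tau>\<in>orth G. (\<forall>x\<in>K. \<tau> (of_int s *s x) \<in> L) \<and> \<tau> v \<in> L \<and>
              (\<forall>x\<in>K. \<tau> (u + of_int s *s x) \<in> L))))"

definition prec_vec :: "rat^'n^'n \<Rightarrow> int \<Rightarrow> int \<Rightarrow> int \<Rightarrow> int \<Rightarrow> (rat^'n) set \<Rightarrow> rat^'n \<Rightarrow> bool" where
  "prec_vec G A \<alpha> \<beta> s L w \<longleftrightarrow>
     (\<forall>v\<in>L. Qf G v = of_int A \<longrightarrow>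
       (\<forall>u\<in>L. rcong s (Qf G u) \<alpha> \<and> rcong s (Bf G u v) \<beta> \<longrightarrow>
          (\<exists>\<tau>\<in>orth G. (\<forall>x\<in>L. \<tau> (of_int s *s x) \<in> L) \<and> \<tau> v \<in> L \<and> \<tau> v = w \<and>
              (\<forall>x\<in>L. \<tau> (u + of_int s *s x) \<in> L))))"

definition frakS :: "rat^'n^'n \<Rightarrow> int \<Rightarrow> int \<Rightarrow> (rat^'n) set \<Rightarrow> rat^'n \<Rightarrow> (int \<times> int) set" where
  "frakS G A s L w = {(\<alpha>, \<beta>). 0 \<le> \<alpha> \<and> \<alpha> < s \<and> 0 \<le> \<beta> \<and> \<beta> < s \<and>
      prec_vec G A \<alpha> \<beta> s L w \<and>
      (\<forall>K\<in>genus G L. \<not> lattice_isometric G K L \<longrightarrow> prec_lat G A \<alpha> \<beta> s K L)}"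

text \<open>The binary lattice [A,b,a] = Z v1 + Z v2, modelled on int \<times> int with v1 = (1,0),
  v2 = (0,1).\<close>
fun binB :: "int \<Rightarrow> int \<Rightarrow> int \<Rightarrow> int \<times> int \<Rightarrow> int \<times> int \<Rightarrow> int" where
  "binB A b a (x1, x2) (y1, y2) = A * x1 * y1 + b * (x1 * y2 + x2 * y1) + a * x2 * y2"

definition represents_binary :: "rat^'n^'n \<Rightarrow> int \<Rightarrow> int \<Rightarrow> int \<Rightarrow> (rat^'n) set \<Rightarrow> (int \<times> int \<Rightarrow> rat^'n) \<Rightarrow> bool" where
  "represents_binary G A b a K \<sigma> \<longleftrightarrow>
     (\<forall>x y. \<sigma> (x + y) = \<sigma> x + \<sigma> y) \<and> (\<forall>x. \<sigma> x \<in> K) \<and>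
     (\<forall>x y. Bf G (\<sigma> x) (\<sigma> y) = of_int (binB A b a x y))"

end

theory Submission
  imports Defs
begin

lemma lat_comb:
  fixes x :: "rat^'n"
  assumes "lattice_on G L" "x \<in> L" "y \<in> L"
  shows "of_int m *s x + of_int n *s y \<in> L"
proof -
  have "\<exists>b. lattice_basis L b" using assms(1) unfolding lattice_on_def by (rule conjunct1)
  then obtain b where b: "lattice_basis L b" ..
  then have Ld: "L = {(\<Sum>i\<in>UNIV. of_int (c i) *s b i) | c :: _ \<Rightarrow> int. True}"
    unfolding lattice_basis_def by (rule conjunct2)
  obtain c where c: "x = (\<Sum>i\<in>UNIV. of_int (c i) *s b i)" using assms(2) unfolding Ld by blast
  obtain d where d: "y = (\<Sum>i\<in>UNIV. of_int (d i) *s b i)" using assms(3) unfolding Ld by blast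
  have "of_int m *s x + of_int n *s y = (\<Sum>i\<in>UNIV. of_int (m * c i + n * d i) *s b i)"
  proof -
    have 1: "of_int m *s x = (\<Sum>i\<in>UNIV. of_int (m * c i) *s b i)"
      unfolding c by (simp add: vec.scale_sum_right vector_smult_assoc)
    have 2: "of_int n *s y = (\<Sum>i\<in>UNIV. of_int (n * d i) *s b i)"
      unfolding d by (simp add: vec.scale_sum_right vector_smult_assoc)
    show ?thesis unfolding 1 2 by (simp only: sum.distrib[symmetric] vector_sadd_rdistrib of_int_add)
  qed
  then have "\<exists>cc::_ \<Rightarrow> int. of_int m *s x + of_int n *s y = (\<Sum>i\<in>UNIV. of_int (cc i) *s b i)"
    by (rule exI[of _ "\<lambda>i. m * c i + n * d i"])
  then show ?thesis unfolding Ld by simp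
qed

lemma lat_zero:
  assumes "lattice_on G L" shows "0 \<in> L"
proof -
  have "\<exists>b. lattice_basis L b" using assms(1) unfolding lattice_on_def by (rule conjunct1)
  then obtain b where b: "lattice_basis L b" ..
  then have Ld: "L = {(\<Sum>i\<in>UNIV. of_int (c i) *s b i) | c :: _ \<Rightarrow> int. True}"
    unfolding lattice_basis_def by (rule conjunct2)
  show ?thesis unfolding Ld by (rule CollectI, rule exI[of _ "\<lambda>_. 0"], simp)
qed

lemma add_int_scale:
  fixes g :: "int \<Rightarrow> rat^'n"
  assumes "\<And>x y. g (x + y) = g x + g y"
  shows "g k = of_int k *s g 1"
proof -
  have g0: "g 0 = 0" using assms[of 0 0] by simp
  have gn: "g (int n) = of_nat n *s g 1" for n
  proof (induction n)
    case 0 then show ?case using g0 by simp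
  next
    case (Suc n)
    have "g (int (Suc n)) = g (int n + 1)" by (metis add.commute of_nat_Suc)
    also have "\<dots> = g (int n) + g 1" by (rule assms)
    also have "\<dots> = of_nat n *s g 1 + 1 *s g 1" using Suc by simp
    also have "\<dots> = of_nat (Suc n) *s g 1" by (simp only: vector_sadd_rdistrib[symmetric] of_nat_Suc add.commute)
    finally show ?case .
  qed
  show ?thesis
  proof (cases "k \<ge> 0")
    case True then show ?thesis using gn[of "nat k"] by simp
  next
    case False
    have "g (-k + k) = g (-k) + g k" by (rule assms)
    then have "g (-k) + g k = 0" using g0 by simp
    then have e: "- g (-k) = g k" by (rule minus_unique)
    have h: "int (nat (-k)) = -k" using False by simp
    have q: "(of_nat (nat (-k)) :: rat) = of_int (-k)" by (metis h of_int_of_nat_eq)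
    have "g (-k) = of_int (-k) *s g 1" using gn[of "nat (-k)"] unfolding h q .
    then have "g k = - (of_int (-k) *s g 1)" using e by simp
    also have "\<dots> = of_int k *s g 1" by (simp only: of_int_minus vector_smult_lneg minus_minus)
    finally show ?thesis .
  qed
qed

lemma rep_decomp:
  fixes \<sigma> :: "int \<times> int \<Rightarrow> rat^'n"
  assumes "\<And>x y. \<sigma> (x + y) = \<sigma> x + \<sigma> y"
  shows "\<sigma> (x1, x2) = of_int x1 *s \<sigma> (1,0) + of_int x2 *s \<sigma> (0,1)"
proof -
  have s: "\<sigma> (x1, x2) = \<sigma> (x1, 0) + \<sigma> (0, x2)" using assms[of "(x1,0)" "(0,x2)"] by simp
  have h1: "\<sigma> (k, 0) = of_int k *s \<sigma> (1,0)" for k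
  proof -
    have "(\<lambda>k. \<sigma> (k,0)) k = of_int k *s (\<lambda>k. \<sigma> (k,0)) 1"
    proof (rule add_int_scale)
      fix x y :: int show "\<sigma> (x + y, 0) = \<sigma> (x, 0) + \<sigma> (y, 0)" using assms[of "(x,0)" "(y,0)"] by simp
    qed
    then show ?thesis by simp
  qed
  have h2: "\<sigma> (0, k) = of_int k *s \<sigma> (0,1)" for k
  proof -
    have "(\<lambda>k. \<sigma> (0,k)) k = of_int k *s (\<lambda>k. \<sigma> (0,k)) 1"
    proof (rule add_int_scale)
      fix x y :: int show "\<sigma> (0, x + y) = \<sigma> (0, x) + \<sigma> (0, y)" using assms[of "(0,x)" "(0,y)"] by simp
    qed
    then show ?thesis by simp
  qed
  show ?thesis unfolding s h1[of x1] h2[of x2] ..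
qed

lemma compose_rep:
  assumes "lattice_on G L" "\<tau> \<in> orth G"
    and "\<And>x y. \<sigma> (x + y) = \<sigma> x + \<sigma> y"
    and "\<And>x y. Bf G (\<sigma> x) (\<sigma> y) = of_int (binB A b a x y)"
    and "\<tau> (\<sigma> (1,0)) \<in> L" "\<tau> (\<sigma> (0,1)) \<in> L"
  shows "represents_binary G A b a L (\<tau> \<circ> \<sigma>)"
proof -
  have tadd: "\<tau> (x + y) = \<tau> x + \<tau> y" and tsc: "\<tau> (c *s x) = c *s \<tau> x"
    and tB: "Bf G (\<tau> x) (\<tau> y) = Bf G x y" for x y c
    using assms(2) unfolding orth_def by blast+
  have "(\<tau> \<circ> \<sigma>) x \<in> L" for x
  proof (cases x)
    case (Pair x1 x2)
    have "(\<tau> \<circ> \<sigma>) x = \<tau> (\<sigma> (x1,x2))" using Pair by simp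
    also have "\<dots> = \<tau> (of_int x1 *s \<sigma> (1,0) + of_int x2 *s \<sigma> (0,1))"
      using rep_decomp[of \<sigma> x1 x2, OF assms(3)] by (rule arg_cong)
    also have "\<dots> = of_int x1 *s \<tau> (\<sigma> (1,0)) + of_int x2 *s \<tau> (\<sigma> (0,1))"
      by (simp only: tadd tsc)
    finally have "(\<tau> \<circ> \<sigma>) x = of_int x1 *s \<tau> (\<sigma> (1,0)) + of_int x2 *s \<tau> (\<sigma> (0,1))" .
    then show ?thesis using lat_comb[OF assms(1,5,6), of x1 x2] by simp
  qed
  then show ?thesis unfolding represents_binary_def
  proof (intro conjI allI)
    fix x y
    show "(\<tau> \<circ> \<sigma>) (x + y) = (\<tau> \<circ> \<sigma>) x + (\<tau> \<circ> \<sigma>) y"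
      unfolding comp_def by (simp only: assms(3) tadd)
    show "Bf G ((\<tau> \<circ> \<sigma>) x) ((\<tau> \<circ> \<sigma>) y) = of_int (binB A b a x y)"
      unfolding comp_def by (simp only: tB assms(4))
  qed
qed

theorem corollary2p4:
  fixes G :: "rat^'n^'n" and L :: "(rat^'n) set" and w :: "rat^'n"
    and A s \<alpha> \<beta> a b :: int
  assumes "symmetric_form G"
    and "lattice_on G L"
    and "A > 0" and "s > 0"
    and "w \<in> L" and "Qf G w = of_int A"
    and "(\<alpha>, \<beta>) \<in> frakS G A s L w"
    and "[a = \<alpha>] (mod s)" and "[b = \<beta>] (mod s)"
    and "A * a - b ^ 2 > 0"
    and "\<exists>K\<in>genus G L. \<exists>\<sigma>. represents_binary G A b a K \<sigma>"
  shows "\<exists>\<sigma>. represents_binary G A b a L \<sigma> \<and> \<sigma> (1, 0) = w"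
proof -
  have ra: "rcong s (of_int a) \<alpha>"
  proof -
    obtain k where "a = \<alpha> + s * k" using assms(8) by (metis cong_iff_lin cong_sym)
    then show ?thesis unfolding rcong_def by blast
  qed
  have rb: "rcong s (of_int b) \<beta>"
  proof -
    obtain k where "b = \<beta> + s * k" using assms(9) by (metis cong_iff_lin cong_sym)
    then show ?thesis unfolding rcong_def by blast
  qed
  have S: "prec_vec G A \<alpha> \<beta> s L w"
    "\<And>K. K \<in> genus G L \<Longrightarrow> \<not> lattice_isometric G K L \<Longrightarrow> prec_lat G A \<alpha> \<beta> s K L"
    using assms(7) unfolding frakS_def by auto
  obtain K \<sigma> where K: "K \<in> genus G L" and \<sigma>: "represents_binary G A b a K \<sigma>"
    using assms(11) by blast
  have Kl: "lattice_on G K" using K unfolding genus_def by blast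
  have sadd: "\<And>x y. \<sigma> (x + y) = \<sigma> x + \<sigma> y" and sK: "\<And>x. \<sigma> x \<in> K"
    and sB: "\<And>x y. Bf G (\<sigma> x) (\<sigma> y) = of_int (binB A b a x y)"
    using \<sigma> unfolding represents_binary_def by blast+
  have "\<exists>\<rho>. represents_binary G A b a L \<rho>"
  proof (cases "lattice_isometric G K L")
    case True
    then obtain f where f: "bij_betw f K L" "\<forall>x\<in>K. \<forall>y\<in>K. f (x + y) = f x + f y"
      "\<forall>x\<in>K. \<forall>y\<in>K. Bf G (f x) (f y) = Bf G x y"
      unfolding lattice_isometric_def by blast
    have fL: "f (\<sigma> x) \<in> L" for x using f(1) sK unfolding bij_betw_def by blast
    have "represents_binary G A b a L (f \<circ> \<sigma>)"
      unfolding represents_binary_def comp_def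
    proof (intro conjI allI)
      fix x y show "f (\<sigma> (x + y)) = f (\<sigma> x) + f (\<sigma> y)" using f(2) sK sadd by simp
      show "f (\<sigma> x) \<in> L" by (rule fL)
      show "Bf G (f (\<sigma> x)) (f (\<sigma> y)) = rat_of_int (binB A b a x y)" using f(3) sK sB by simp
    qed
    then show ?thesis by blast
  next
    case False
    have P: "prec_lat G A \<alpha> \<beta> s K L" using S(2)[OF K False] .
    have Qv: "Qf G (\<sigma> (1,0)) = of_int A" unfolding Qf_def using sB[of "(1,0)" "(1,0)"] by simp
    have Qu: "rcong s (Qf G (\<sigma> (0,1))) \<alpha>" unfolding Qf_def using sB[of "(0,1)" "(0,1)"] ra by simp
    have Bu: "rcong s (Bf G (\<sigma> (0,1)) (\<sigma> (1,0))) \<beta>" using sB[of "(0,1)" "(1,0)"] rb by simp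
    obtain \<tau> where t: "\<tau> \<in> orth G" "\<tau> (\<sigma> (1,0)) \<in> L" "\<forall>x\<in>K. \<tau> (\<sigma> (0,1) + of_int s *s x) \<in> L"
      using P sK[of "(1,0)"] sK[of "(0,1)"] Qv Qu Bu unfolding prec_lat_def by meson
    have "\<tau> (\<sigma> (0,1) + of_int s *s 0) \<in> L" using t(3) lat_zero[OF Kl] by blast
    then have "\<tau> (\<sigma> (0,1)) \<in> L" by simp
    then have "represents_binary G A b a L (\<tau> \<circ> \<sigma>)"
      using compose_rep[OF assms(2) t(1) sadd sB t(2)] by blast
    then show ?thesis by blast
  qed
  then obtain \<rho> where \<rho>: "represents_binary G A b a L \<rho>" by blast
  have radd: "\<And>x y. \<rho> (x + y) = \<rho> x + \<rho> y" and rL: "\<And>x. \<rho> x \<in> L"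
    and rB: "\<And>x y. Bf G (\<rho> x) (\<rho> y) = of_int (binB A b a x y)"
    using \<rho> unfolding represents_binary_def by blast+
  have Qv: "Qf G (\<rho> (1,0)) = of_int A" unfolding Qf_def using rB[of "(1,0)" "(1,0)"] by simp
  have Qu: "rcong s (Qf G (\<rho> (0,1))) \<alpha>" unfolding Qf_def using rB[of "(0,1)" "(0,1)"] ra by simp
  have Bu: "rcong s (Bf G (\<rho> (0,1)) (\<rho> (1,0))) \<beta>" using rB[of "(0,1)" "(1,0)"] rb by simp
  obtain \<tau> where t: "\<tau> \<in> orth G" "\<tau> (\<rho> (1,0)) \<in> L" "\<tau> (\<rho> (1,0)) = w"
     "\<forall>x\<in>L. \<tau> (\<rho> (0,1) + of_int s *s x) \<in> L"
    using S(1) rL[of "(1,0)"] rL[of "(0,1)"] Qv Qu Bu unfolding prec_vec_def by meson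
  have "\<tau> (\<rho> (0,1) + of_int s *s 0) \<in> L" using t(4) lat_zero[OF assms(2)] by blast
  then have "\<tau> (\<rho> (0,1)) \<in> L" by simp
  then have "represents_binary G A b a L (\<tau> \<circ> \<rho>)"
    using compose_rep[OF assms(2) t(1) radd rB t(2)] by blast
  then show ?thesis using t(3) by auto
qed

end
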